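(* Let $(X,d)$ be a compact metric space with $\dim X=0$ and let $f\in\mathcal{H}(X)$ be equicontinuous. Then $\lim_{\delta\to0}r(\delta)=0$.
   Context: $f$ is equicontinuous if for every $\epsilon>0$ there is $\eta>0$ such that $d(x,y)\le\eta$ implies $\sup_{i\in\mathbb{Z}}d(f^i(x),f^i(y))\le\epsilon$; such $f$ satisfies $X=CR(f)$ (every point is chain recurrent). A $\delta$-chain is a finite sequence $(x_i)_{i=0}^k$, $k\ge1$, with $d(f(x_i),x_{i+1})\le\delta$; a $\delta$-cycle is a $\delta$-chain with $x_0=x_k$, of length $k$. For $f$ with $X=CR(f)$ and $\delta>0$: $x\sim_\delta y$ iff there are $\delta$-chains from $x$ to $y$ and from $y$ to $x$; this is an equivalence relation whose classes ($\delta$-chain components) are finitely many, clopen and $f$-invariant. For a $\delta$-chain component $C$, let $m$ be the gcd of the lengths of all $\delta$-cycles lying in $C$; define $x\sim_{\delta,m}y$ for $x,y\in C$ iff there is a $\delta$-chain from $x$ to $y$ whose length is divisible by $m$. This is an equivalence relation on $C$ with exactly $m$ classes (the $\delta$-cyclic components of $C$), each clopen. $r(\delta)$ denotes the maximum of the diameters of all $\delta$-cyclic components of all $\delta$-chain components of $X$. *)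

theory Defs
  imports "HOL-Analysis.Analysis"
begin

definition zpow :: "'a set \<Rightarrow> ('a \<Rightarrow> 'a) \<Rightarrow> int \<Rightarrow> 'a \<Rightarrow> 'a" where
  "zpow X f i = (if 0 \<le> i then f ^^ nat i else (inv_into X f) ^^ nat (- i))"

definition is_homeo :: "'a::topological_space set \<Rightarrow> ('a \<Rightarrow> 'a) \<Rightarrow> bool" where
  "is_homeo X f \<longleftrightarrow> (\<exists>g. homeomorphism X X f g)"

definition equicontinuous :: "'a::metric_space set \<Rightarrow> ('a \<Rightarrow> 'a) \<Rightarrow> bool" where
  "equicontinuous X f \<longleftrightarrow>
     (\<forall>\<epsilon>>0. \<exists>\<eta>>0. \<forall>x\<in>X. \<forall>y\<in>X. dist x y \<le> \<eta> \<longrightarrow>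
        (\<forall>i::int. dist (zpow X f i x) (zpow X f i y) \<le> \<epsilon>))"

text \<open>Topological dimension zero (small inductive dimension 0): X nonempty and every
  point has arbitrarily small neighbourhoods that are clopen in X.\<close>
definition zero_dim :: "'a::topological_space set \<Rightarrow> bool" where
  "zero_dim X \<longleftrightarrow> X \<noteq> {} \<and>
     (\<forall>x\<in>X. \<forall>U. open U \<and> x \<in> U \<longrightarrow>
        (\<exists>V. openin (top_of_set X) V \<and> closedin (top_of_set X) V \<and> x \<in> V \<and> V \<subseteq> U))"

definition dchain :: "'a::metric_space set \<Rightarrow> ('a \<Rightarrow> 'a) \<Rightarrow> real \<Rightarrow> (nat \<Rightarrow> 'a) \<Rightarrow> nat \<Rightarrow> bool" where
  "dchain X f \<delta> c k \<longleftrightarrow> 1 \<le> k \<and> (\<forall>i\<le>k. c i \<in> X) \<and>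
     (\<forall>i<k. dist (f (c i)) (c (Suc i)) \<le> \<delta>)"

definition chain_from_to :: "'a::metric_space set \<Rightarrow> ('a \<Rightarrow> 'a) \<Rightarrow> real \<Rightarrow> 'a \<Rightarrow> 'a \<Rightarrow> nat \<Rightarrow> bool" where
  "chain_from_to X f \<delta> x y k \<longleftrightarrow> (\<exists>c. dchain X f \<delta> c k \<and> c 0 = x \<and> c k = y)"

definition chain_equiv :: "'a::metric_space set \<Rightarrow> ('a \<Rightarrow> 'a) \<Rightarrow> real \<Rightarrow> 'a \<Rightarrow> 'a \<Rightarrow> bool" where
  "chain_equiv X f \<delta> x y \<longleftrightarrow> (\<exists>k. chain_from_to X f \<delta> x y k) \<and> (\<exists>k. chain_from_to X f \<delta> y x k)"

definition chain_components :: "'a::metric_space set \<Rightarrow> ('a \<Rightarrow> 'a) \<Rightarrow> real \<Rightarrow> 'a set set" where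
  "chain_components X f \<delta> = {{y\<in>X. chain_equiv X f \<delta> x y} | x. x \<in> X}"

definition cycle_period :: "'a::metric_space set \<Rightarrow> ('a \<Rightarrow> 'a) \<Rightarrow> real \<Rightarrow> 'a set \<Rightarrow> nat" where
  "cycle_period X f \<delta> C =
     Gcd {k. \<exists>c. dchain X f \<delta> c k \<and> c 0 = c k \<and> (\<forall>i\<le>k. c i \<in> C)}"

definition cyclic_components :: "'a::metric_space set \<Rightarrow> ('a \<Rightarrow> 'a) \<Rightarrow> real \<Rightarrow> 'a set \<Rightarrow> 'a set set" where
  "cyclic_components X f \<delta> C =
     {{y\<in>C. \<exists>k. cycle_period X f \<delta> C dvd k \<and> chain_from_to X f \<delta> x y k} | x. x \<in> C}"

text \<open>r(delta): maximum of the diameters of all delta-cyclic components of all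
  delta-chain components (a finite set under the standing hypotheses).\<close>
definition r_fun :: "'a::metric_space set \<Rightarrow> ('a \<Rightarrow> 'a) \<Rightarrow> real \<Rightarrow> real" where
  "r_fun X f \<delta> = Max {diameter D | D C. C \<in> chain_components X f \<delta> \<and> D \<in> cyclic_components X f \<delta> C}"

end

theory Submission
  imports Defs
begin


lemma homeo_basic:
  assumes "homeomorphism X X f g"
  shows "inj_on f X" "f ` X = X" "\<And>x. x \<in> X \<Longrightarrow> f x \<in> X"
    "\<And>x. x \<in> X \<Longrightarrow> inv_into X f x \<in> X"
    "\<And>x. x \<in> X \<Longrightarrow> inv_into X f (f x) = x"
proof -
  have g: "\<And>x. x \<in> X \<Longrightarrow> g (f x) = x" "f ` X = X" using assms by (auto simp: homeomorphism_def)
  show i: "inj_on f X" by (metis g(1) inj_onI)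
  show "f ` X = X" by (rule g(2))
  show "\<And>x. x \<in> X \<Longrightarrow> f x \<in> X" using g(2) by auto
  show "\<And>x. x \<in> X \<Longrightarrow> inv_into X f x \<in> X" using g(2) by (metis inv_into_into)
  show "\<And>x. x \<in> X \<Longrightarrow> inv_into X f (f x) = x" using i by (simp add: inv_into_f_f)
qed

lemma funpow_in:
  assumes "\<And>x. x \<in> X \<Longrightarrow> h x \<in> X" "x \<in> X"
  shows "(h ^^ n) x \<in> X"
  using assms by (induction n) auto

lemma zpow_in:
  assumes "homeomorphism X X f g" "x \<in> X"
  shows "zpow X f i x \<in> X"
  using homeo_basic[OF assms(1)] assms(2)
  by (auto simp: zpow_def intro!: funpow_in[where X=X])

lemma zpow_shift:
  assumes "homeomorphism X X f g" "x \<in> X"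
  shows "zpow X f i (f x) = zpow X f (i+1) x"
proof (cases "0 \<le> i")
  case True
  then have "nat (i+1) = Suc (nat i)" by simp
  then show ?thesis using True by (simp add: zpow_def funpow_Suc_right del: funpow.simps)
next
  case False
  define n where "n = nat (- i - 1)"
  have n: "i = - int (Suc n)" using False unfolding n_def by simp
  then have "nat (- i) = Suc n" "nat (-(i+1)) = n" by auto
  moreover have "inv_into X f (f x) = x" using homeo_basic[OF assms(1)] assms(2) by auto
  ultimately show ?thesis using False n
    by (simp add: zpow_def funpow_Suc_right del: funpow.simps)
qed

lemma zpow_nat: "zpow X f (int n) = f ^^ n"
  by (simp add: zpow_def)



definition goodR :: "'a::metric_space set \<Rightarrow> ('a\<Rightarrow>'a) \<Rightarrow> ('a\<Rightarrow>'a\<Rightarrow>bool) \<Rightarrow> real \<Rightarrow> real \<Rightarrow> bool" where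
"goodR X f R e lm \<longleftrightarrow> (\<forall>x y. R x y \<longrightarrow> x\<in>X \<and> y\<in>X) \<and> (\<forall>x\<in>X. R x x) \<and> (\<forall>x y. R x y \<longrightarrow> R y x)
  \<and> (\<forall>x y z. R x y \<longrightarrow> R y z \<longrightarrow> R x z) \<and> (\<forall>x y. R x y \<longrightarrow> dist x y \<le> e) \<and> 0 < lm
  \<and> (\<forall>x\<in>X. \<forall>y\<in>X. dist x y \<le> lm \<longrightarrow> R x y) \<and> (\<forall>x\<in>X. \<forall>y\<in>X. R (f x) (f y) \<longleftrightarrow> R x y)"

lemma exists_goodR:
  fixes X :: "'a::metric_space set"
  assumes cX: "compact X" and zd: "zero_dim X" and hom: "homeomorphism X X f g"
    and eq: "equicontinuous X f" and e: "e > 0"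
  shows "\<exists>R lm. goodR X f R e lm"
proof -
  have "\<forall>x\<in>X. \<exists>V. openin (top_of_set X) V \<and> closedin (top_of_set X) V \<and> x\<in>V \<and> V \<subseteq> ball x (e/2)"
    using zd e unfolding zero_dim_def by (metis centre_in_ball half_gt_zero open_ball)
  then obtain Vf where Vf: "\<And>x. x\<in>X \<Longrightarrow> openin (top_of_set X) (Vf x) \<and> closedin (top_of_set X) (Vf x) \<and> x \<in> Vf x \<and> Vf x \<subseteq> ball x (e/2)"
    by metis
  have "\<forall>x\<in>X. \<exists>W. open W \<and> Vf x = X \<inter> W" using Vf by (meson openin_open)
  then obtain Of where Of: "\<And>x. x\<in>X \<Longrightarrow> open (Of x) \<and> Vf x = X \<inter> Of x" by metis
  have "X \<subseteq> (\<Union>x\<in>X. Of x)" using Of Vf by blast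
  then obtain T where T: "T \<subseteq> X" "finite T" "X \<subseteq> (\<Union>x\<in>T. Of x)"
    using compactE_image[OF cX, of X Of] Of by metis
  define \<V> where "\<V> = Vf ` T"
  have finV: "finite \<V>" using T by (simp add: \<V>_def)
  have cov: "\<And>x. x \<in> X \<Longrightarrow> \<exists>V\<in>\<V>. x \<in> V" using T Of unfolding \<V>_def by fastforce
  have small: "\<And>V a b. V \<in> \<V> \<Longrightarrow> a \<in> V \<Longrightarrow> b \<in> V \<Longrightarrow> dist a b \<le> e"
  proof -
    fix V a b assume "V \<in> \<V>" "a \<in> V" "b \<in> V"
    then obtain t where t: "t \<in> X" "V = Vf t" using T \<V>_def by auto
    then have "dist t a < e/2" "dist t b < e/2" using Vf[OF t(1)] \<open>a\<in>V\<close> \<open>b\<in>V\<close> by auto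
    moreover have "dist a b \<le> dist a t + dist t b" by (rule dist_triangle)
    ultimately show "dist a b \<le> e" by (simp add: dist_commute)
  qed
  have "\<forall>V\<in>\<V>. \<exists>W C. open W \<and> closed C \<and> V = X \<inter> W \<and> V = X \<inter> C"
  proof
    fix V assume "V \<in> \<V>"
    then obtain t where t: "t \<in> X" "V = Vf t" using T unfolding \<V>_def by auto
    then have "openin (top_of_set X) V" "closedin (top_of_set X) V" using Vf by auto
    then show "\<exists>W C. open W \<and> closed C \<and> V = X \<inter> W \<and> V = X \<inter> C"
      unfolding openin_open closedin_closed by blast
  qed
  then obtain OV CV where OC: "\<And>V. V\<in>\<V> \<Longrightarrow> open (OV V) \<and> closed (CV V) \<and> V = X \<inter> OV V \<and> V = X \<inter> CV V"
    by metis
  define A where "A x = (\<Inter>V\<in>\<V>. if x \<in> V then OV V else - CV V)" for x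
  have Aopen: "open (A x)" for x
    unfolding A_def using finV OC by (intro open_INT) (auto simp: open_Compl)
  have Ain: "x \<in> A x" if "x \<in> X" for x
    unfolding A_def using OC that by auto
  obtain \<epsilon>0 where e0: "0 < \<epsilon>0" "\<And>x. x \<in> X \<Longrightarrow> \<exists>G\<in>A ` X. ball x \<epsilon>0 \<subseteq> G"
    using Heine_Borel_lemma[OF cX, of "A ` X"] Aopen Ain by blast
  have sep: "\<forall>V\<in>\<V>. a \<in> V \<longleftrightarrow> b \<in> V" if ha: "a \<in> X" "b \<in> X" "dist a b < \<epsilon>0" for a b
  proof -
    obtain z where z: "z \<in> X" "ball a \<epsilon>0 \<subseteq> A z" using e0(2)[OF ha(1)] by auto
    have ab: "a \<in> A z" "b \<in> A z" using z e0(1) ha(3) by (auto simp: dist_commute subset_iff)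
    show ?thesis
    proof
      fix V assume V: "V \<in> \<V>"
      have "a \<in> (if z \<in> V then OV V else - CV V)" "b \<in> (if z \<in> V then OV V else - CV V)"
        using ab V unfolding A_def by blast+
      then show "a \<in> V \<longleftrightarrow> b \<in> V"
        using OC[OF V] ha by (cases "z \<in> V") auto
    qed
  qed
  have "\<epsilon>0/2 > 0" using e0(1) by simp
  then obtain \<eta> where eta0: "\<eta> > 0" "\<forall>x\<in>X. \<forall>y\<in>X. dist x y \<le> \<eta> \<longrightarrow> (\<forall>i::int. dist (zpow X f i x) (zpow X f i y) \<le> \<epsilon>0/2)"
    using eq unfolding equicontinuous_def by blast
  have eta: "\<eta> > 0" "\<And>x y i. x\<in>X \<Longrightarrow> y\<in>X \<Longrightarrow> dist x y \<le> \<eta> \<Longrightarrow> dist (zpow X f i x) (zpow X f i y) \<le> \<epsilon>0/2"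
    using eta0 by blast+
  define R where "R x y \<longleftrightarrow> x\<in>X \<and> y\<in>X \<and> (\<forall>i. \<forall>V\<in>\<V>. zpow X f i x \<in> V \<longleftrightarrow> zpow X f i y \<in> V)" for x y
  have z0: "zpow X f 0 x = x" for x by (simp add: zpow_def)
  have "goodR X f R e \<eta>"
    unfolding goodR_def
  proof (intro conjI)
    show "\<forall>x y. R x y \<longrightarrow> x \<in> X \<and> y \<in> X" by (simp add: R_def)
    show "\<forall>x\<in>X. R x x" by (simp add: R_def)
    show "\<forall>x y. R x y \<longrightarrow> R y x" by (simp add: R_def)
    show "\<forall>x y z. R x y \<longrightarrow> R y z \<longrightarrow> R x z" by (simp add: R_def)
    show "\<forall>x y. R x y \<longrightarrow> dist x y \<le> e"
    proof (intro allI impI)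
      fix x y assume "R x y"
      then have "x \<in> X" "\<forall>V\<in>\<V>. x \<in> V \<longleftrightarrow> y \<in> V" unfolding R_def by (metis z0)+
      then obtain V where V: "V \<in> \<V>" "x \<in> V" using cov by blast
      then have "y \<in> V" using \<open>\<forall>V\<in>\<V>. x \<in> V \<longleftrightarrow> y \<in> V\<close> by blast
      then show "dist x y \<le> e" using small[OF V] by blast
    qed
    show "0 < \<eta>" by fact
    show "\<forall>x\<in>X. \<forall>y\<in>X. dist x y \<le> \<eta> \<longrightarrow> R x y"
    proof (intro ballI impI)
      fix x y assume xy: "x \<in> X" "y \<in> X" "dist x y \<le> \<eta>"
      have "\<forall>V\<in>\<V>. zpow X f i x \<in> V \<longleftrightarrow> zpow X f i y \<in> V" for i
        using sep[OF zpow_in[OF hom xy(1)] zpow_in[OF hom xy(2)]] eta(2)[OF xy, of i] e0(1) by simp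
      then show "R x y" using xy unfolding R_def by blast
    qed
    show "\<forall>x\<in>X. \<forall>y\<in>X. R (f x) (f y) = R x y"
    proof (intro ballI)
      fix x y assume xy: "x \<in> X" "y \<in> X"
      have fx: "f x \<in> X" "f y \<in> X" using homeo_basic(3)[OF hom] xy by auto
      have sh: "(\<forall>i::int. P (i+1)) \<longleftrightarrow> (\<forall>i. P i)" for P by (metis diff_add_cancel)
      show "R (f x) (f y) = R x y"
        unfolding R_def using fx xy zpow_shift[OF hom] sh[of "\<lambda>i. \<forall>V\<in>\<V>. zpow X f i x \<in> V \<longleftrightarrow> zpow X f i y \<in> V"]
        by simp
    qed
  qed
  then show ?thesis by blast
qed



lemma goodR_D:
  assumes "goodR X f R e lm"
  shows "\<And>x y. R x y \<Longrightarrow> x\<in>X" "\<And>x y. R x y \<Longrightarrow> y\<in>X" "\<And>x. x\<in>X \<Longrightarrow> R x x"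
    "\<And>x y. R x y \<Longrightarrow> R y x" "\<And>x y z. R x y \<Longrightarrow> R y z \<Longrightarrow> R x z"
    "\<And>x y. R x y \<Longrightarrow> dist x y \<le> e" "0 < lm"
    "\<And>x y. x\<in>X \<Longrightarrow> y\<in>X \<Longrightarrow> dist x y \<le> lm \<Longrightarrow> R x y"
    "\<And>x y. x\<in>X \<Longrightarrow> y\<in>X \<Longrightarrow> R (f x) (f y) \<longleftrightarrow> R x y"
  using assms unfolding goodR_def by blast+

lemma funpow_R:
  assumes g: "goodR X f R e lm" and hf: "\<And>x. x\<in>X \<Longrightarrow> f x \<in> X" and "x\<in>X" "y\<in>X"
  shows "R ((f^^n) x) ((f^^n) y) \<longleftrightarrow> R x y"
  using assms(3,4)
proof (induction n)
  case 0 then show ?case by simp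
next
  case (Suc n)
  have "(f^^n) x \<in> X" "(f^^n) y \<in> X" using funpow_in[of X f] hf Suc.prems by auto
  then show ?case using goodR_D(9)[OF g] Suc by simp
qed

lemma chain_track:
  assumes g: "goodR X f R e lm" and hf: "\<And>x. x\<in>X \<Longrightarrow> f x \<in> X" and d: "\<delta> \<le> lm"
    and c: "dchain X f \<delta> c k"
  shows "i \<le> k \<Longrightarrow> R (c i) ((f^^i) (c 0))"
proof (induction i)
  case 0
  then show ?case using c goodR_D(3)[OF g] unfolding dchain_def by simp
next
  case (Suc i)
  have ci: "c i \<in> X" "c (Suc i) \<in> X" using c Suc.prems unfolding dchain_def by auto
  have "dist (f (c i)) (c (Suc i)) \<le> \<delta>" using c Suc.prems unfolding dchain_def by auto
  then have "dist (f (c i)) (c (Suc i)) \<le> lm" using d by linarith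
  then have r1: "R (f (c i)) (c (Suc i))" using goodR_D(8)[OF g hf[OF ci(1)] ci(2)] by blast
  have r0: "R (c i) ((f^^i) (c 0))" using Suc by simp
  have h2: "(f^^i) (c 0) \<in> X" using goodR_D(2)[OF g r0] .
  have r2: "R (f (c i)) (f ((f^^i) (c 0)))" using r0 unfolding goodR_D(9)[OF g ci(1) h2] .
  have "R (c (Suc i)) (f ((f^^i) (c 0)))" using goodR_D(5)[OF g goodR_D(4)[OF g r1] r2] .
  then show ?case by simp
qed

lemma chain_track2:
  assumes g: "goodR X f R e lm" and hf: "\<And>x. x\<in>X \<Longrightarrow> f x \<in> X" and d: "\<delta> \<le> lm"
    and c: "chain_from_to X f \<delta> x y k"
  shows "R y ((f^^k) x)"
proof -
  obtain c' where c': "dchain X f \<delta> c' k" "c' 0 = x" "c' k = y" using c unfolding chain_from_to_def by blast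
  show ?thesis using chain_track[OF g hf d c'(1), of k] c'(2,3) by simp
qed

lemma period:
  assumes g: "goodR X f R e lm" and hf: "\<And>x. x\<in>X \<Longrightarrow> f x \<in> X" and cX: "compact X" and y: "y \<in> X"
  shows "\<exists>p\<ge>1. R ((f^^p) y) y"
proof -
  define s where "s n = (f^^n) y" for n
  have sX: "\<forall>n. s n \<in> X" using funpow_in[of X f] hf y s_def by auto
  obtain l r where lr: "l \<in> X" "strict_mono (r::nat\<Rightarrow>nat)" "(s \<circ> r) \<longlonglongrightarrow> l"
    using seq_compactE[OF compact_imp_seq_compact[OF cX] sX] by metis
  have "Cauchy (s \<circ> r)" using lr(3) by (rule LIMSEQ_imp_Cauchy)
  then obtain N where N: "\<And>m n. m \<ge> N \<Longrightarrow> n \<ge> N \<Longrightarrow> dist ((s\<circ>r) m) ((s\<circ>r) n) < lm"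
    using goodR_D(7)[OF g] by (meson metric_CauchyD)
  define a b where "a = r N" and "b = r (Suc N)"
  have ab: "a < b" using lr(2) a_def b_def by (simp add: strict_mono_def)
  have "dist (s a) (s b) < lm" using N[of N "Suc N"] a_def b_def by simp
  then have "R (s a) (s b)" using goodR_D(8)[OF g] sX by auto
  moreover have "s b = (f^^a) ((f^^(b-a)) y)" using ab unfolding s_def
    by (metis funpow_add le_add_diff_inverse less_imp_le o_apply)
  ultimately have "R ((f^^a) y) ((f^^a) ((f^^(b-a)) y))" unfolding s_def by simp
  then have "R y ((f^^(b-a)) y)" using funpow_R[OF g hf] funpow_in[of X f] hf y by blast
  then show ?thesis using ab goodR_D(4)[OF g] by (intro exI[of _ "b-a"]) auto
qed

lemma concat_chain:
  assumes "chain_from_to X f \<delta> x y k1" "chain_from_to X f \<delta> y z k2"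
  shows "chain_from_to X f \<delta> x z (k1+k2)"
proof -
  obtain c1 where c1: "dchain X f \<delta> c1 k1" "c1 0 = x" "c1 k1 = y" using assms(1) chain_from_to_def by metis
  obtain c2 where c2: "dchain X f \<delta> c2 k2" "c2 0 = y" "c2 k2 = z" using assms(2) chain_from_to_def by metis
  define c where "c i = (if i \<le> k1 then c1 i else c2 (i - k1))" for i
  have "dchain X f \<delta> c (k1+k2)"
    unfolding dchain_def
  proof (intro conjI allI impI)
    show "1 \<le> k1 + k2" using c1 unfolding dchain_def by simp
    fix i
    show "i \<le> k1 + k2 \<Longrightarrow> c i \<in> X" using c1 c2 unfolding dchain_def c_def by auto
    assume i: "i < k1 + k2"
    show "dist (f (c i)) (c (Suc i)) \<le> \<delta>"
    proof (cases "Suc i \<le> k1")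
      case True then show ?thesis using c1 unfolding dchain_def c_def by auto
    next
      case False
      then have "i \<ge> k1" by simp
      show ?thesis
      proof (cases "i = k1")
        case True
        then show ?thesis using c1 c2 i unfolding dchain_def c_def by auto
      next
        case False
        then have "Suc i - k1 = Suc (i - k1)" "i - k1 < k2" using \<open>i \<ge> k1\<close> i by auto
        then show ?thesis using c2 False \<open>i \<ge> k1\<close> unfolding dchain_def c_def by auto
      qed
    qed
  qed
  then show ?thesis unfolding chain_from_to_def using c1 c2 c_def by (intro exI[of _ c]) auto
qed

lemma orbit_chain:
  assumes hf: "\<And>x. x\<in>X \<Longrightarrow> f x \<in> X" and "y \<in> X" "y' \<in> X" "p \<ge> 1" "0 \<le> \<delta>"
    "dist ((f^^p) y) y' \<le> \<delta>"
  shows "chain_from_to X f \<delta> y y' p"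
proof -
  define c where "c i = (if i < p then (f^^i) y else y')" for i
  have "dchain X f \<delta> c p"
    unfolding dchain_def
  proof (intro conjI allI impI)
    show "1 \<le> p" by fact
    fix i
    show "i \<le> p \<Longrightarrow> c i \<in> X" using funpow_in[of X f] hf assms unfolding c_def by auto
    assume i: "i < p"
    show "dist (f (c i)) (c (Suc i)) \<le> \<delta>"
    proof (cases "Suc i < p")
      case True then show ?thesis using i assms(5) unfolding c_def by auto
    next
      case False
      then have "p = Suc i" using i by auto
      then show ?thesis using i assms(6) unfolding c_def by auto
    qed
  qed
  moreover have "c 0 = y" "c p = y'" using assms(4) by (auto simp: c_def)
  ultimately show ?thesis unfolding chain_from_to_def by blast
qed

lemma chain_equiv_trans:
  "chain_equiv X f \<delta> x y \<Longrightarrow> chain_equiv X f \<delta> y z \<Longrightarrow> chain_equiv X f \<delta> x z"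
  unfolding chain_equiv_def using concat_chain by metis

lemma chain_equiv_sym: "chain_equiv X f \<delta> x y \<Longrightarrow> chain_equiv X f \<delta> y x"
  unfolding chain_equiv_def by blast

lemma cycle_equiv:
  assumes c: "dchain X f \<delta> c k" "c 0 = c k" and i: "i \<le> k"
  shows "chain_equiv X f \<delta> (c 0) (c i)"
proof -
  have whole: "chain_from_to X f \<delta> (c 0) (c k) k" using c unfolding chain_from_to_def by blast
  have a: "\<exists>j. chain_from_to X f \<delta> (c 0) (c i) j"
  proof (cases "i = 0")
    case True then show ?thesis using whole c by auto
  next
    case False
    have c1: "\<forall>j\<le>k. c j \<in> X" "\<forall>j<k. dist (f (c j)) (c (Suc j)) \<le> \<delta>" using c(1) unfolding dchain_def by blast+
    have "\<forall>j\<le>i. c j \<in> X" using c1(1) i by simp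
    moreover have "\<forall>j<i. dist (f (c j)) (c (Suc j)) \<le> \<delta>" using c1(2) i by simp
    ultimately have "dchain X f \<delta> c i" using False unfolding dchain_def by simp
    then show ?thesis unfolding chain_from_to_def by blast
  qed
  have b: "\<exists>j. chain_from_to X f \<delta> (c i) (c 0) j"
  proof (cases "i = k")
    case True then show ?thesis using whole c by auto
  next
    case False
    have c1: "\<forall>j\<le>k. c j \<in> X" "\<forall>j<k. dist (f (c j)) (c (Suc j)) \<le> \<delta>" using c(1) unfolding dchain_def by blast+
    have "\<forall>j\<le>k-i. c (i+j) \<in> X" using c1(1) i by simp
    moreover have "\<forall>j<k-i. dist (f (c (i+j))) (c (Suc (i+j))) \<le> \<delta>" using c1(2) i by simp
    ultimately have "dchain X f \<delta> (\<lambda>j. c (i+j)) (k-i)" using False i unfolding dchain_def by simp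
    then have "chain_from_to X f \<delta> (c i) (c k) (k-i)" unfolding chain_from_to_def using i
      by (intro exI[of _ "\<lambda>j. c (i+j)"]) auto
    then show ?thesis using c(2) by auto
  qed
  show ?thesis using a b unfolding chain_equiv_def by blast
qed

lemma K_lemma:
  fixes K S :: "nat set"
  assumes K0: "0 \<in> K" and Kadd: "\<And>a b. a\<in>K \<Longrightarrow> b\<in>K \<Longrightarrow> a+b \<in> K"
    and Ksub: "\<And>a b. a\<in>K \<Longrightarrow> b\<in>K \<Longrightarrow> b \<le> a \<Longrightarrow> a-b \<in> K"
    and SK: "S \<subseteq> K" and dv: "Gcd S dvd k"
  shows "k \<in> K"
proof (cases "\<exists>q\<in>K. q > 0")
  case False
  then have "S \<subseteq> {0}" using SK by auto
  then have "Gcd S = 0" by simp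
  then have "k = 0" using dv by (metis dvd_0_left_iff)
  then show ?thesis using K0 by simp
next
  case True
  define p where "p = (LEAST q. q \<in> K \<and> q > 0)"
  have p: "p \<in> K" "p > 0" using LeastI_ex[of "\<lambda>q. q\<in>K \<and> q > 0"] True unfolding p_def by auto
  have pmin: "q \<in> K \<Longrightarrow> q > 0 \<Longrightarrow> p \<le> q" for q unfolding p_def by (simp add: Least_le)
  have mult: "p * n \<in> K" for n by (induction n) (auto simp: K0 Kadd p(1))
  have pdvd: "p dvd q" if "q \<in> K" for q
  proof -
    have "q - p * (q div p) \<in> K" using Ksub[OF that mult[of "q div p"]] by (simp add: mult.commute times_div_less_eq_dividend)
    moreover have "q - p * (q div p) = q mod p" by (metis minus_mult_div_eq_mod)
    moreover have "q mod p < p" using p(2) by simp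
    ultimately have "q mod p = 0" using pmin[of "q mod p"] by (cases "q mod p = 0") auto
    then show ?thesis by auto
  qed
  have "p dvd Gcd S" using SK pdvd by (intro Gcd_greatest) auto
  then have "p dvd k" using dv by (rule dvd_trans)
  then show ?thesis using mult by (metis dvdE)
qed



definition saturated :: "'a set \<Rightarrow> ('a\<Rightarrow>'a\<Rightarrow>bool) \<Rightarrow> 'a set \<Rightarrow> bool" where
  "saturated X R D \<longleftrightarrow> D \<subseteq> X \<and> (\<forall>y\<in>D. \<forall>y'. R y y' \<longrightarrow> y' \<in> D)"

lemma sat_finite:
  assumes g: "goodR X f R e lm" and cX: "compact X"
  shows "finite {D. saturated X R D}"
proof -
  have "X \<subseteq> (\<Union>x\<in>X. ball x lm)" using goodR_D(7)[OF g] by auto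
  then obtain T where T: "T \<subseteq> X" "finite T" "X \<subseteq> (\<Union>x\<in>T. ball x lm)"
    using compactE_image[OF cX, of X "\<lambda>x. ball x lm"] by (metis open_ball)
  have near: "\<exists>t\<in>T. R x t" if "x \<in> X" for x
  proof -
    from T(3) that obtain t where "t \<in> T" "x \<in> ball t lm" by blast
    then have "t \<in> T" "dist t x < lm" by auto
    then show ?thesis using goodR_D(8)[OF g, of x t] T that by (auto simp: dist_commute)
  qed
  have "{D. saturated X R D} \<subseteq> (\<lambda>S. {x\<in>X. \<exists>t\<in>S. R x t}) ` Pow T"
  proof
    fix D assume "D \<in> {D. saturated X R D}"
    then have D: "D \<subseteq> X" "\<And>y y'. y \<in> D \<Longrightarrow> R y y' \<Longrightarrow> y' \<in> D" unfolding saturated_def by auto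
    have "D = {x\<in>X. \<exists>t\<in>T \<inter> D. R x t}"
    proof
      show "D \<subseteq> {x\<in>X. \<exists>t\<in>T \<inter> D. R x t}" using D near by blast
      show "{x\<in>X. \<exists>t\<in>T \<inter> D. R x t} \<subseteq> D" using D goodR_D(4)[OF g] by blast
    qed
    then show "D \<in> (\<lambda>S. {x\<in>X. \<exists>t\<in>S. R x t}) ` Pow T" by blast
  qed
  moreover have "finite ((\<lambda>S. {x\<in>X. \<exists>t\<in>S. R x t}) ` Pow T)" using T by simp
  ultimately show ?thesis by (rule finite_subset)
qed

lemma step1:
  assumes g: "goodR X f R \<delta> lm" and hf: "\<And>x. x\<in>X \<Longrightarrow> f x \<in> X" and cX: "compact X"
    and d: "0 \<le> \<delta>" and r: "R y y'"
  shows "\<exists>p\<ge>1. chain_from_to X f \<delta> y y' p \<and> chain_from_to X f \<delta> y y p"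
proof -
  have y: "y \<in> X" "y' \<in> X" using r goodR_D(1,2)[OF g] by auto
  obtain p where p: "p \<ge> 1" "R ((f^^p) y) y" using period[OF g hf cX y(1)] by blast
  have "R ((f^^p) y) y'" using p r goodR_D(5)[OF g] by blast
  then have "chain_from_to X f \<delta> y y' p" using orbit_chain[where X=X and f=f, OF hf y(1) y(2) p(1) d] goodR_D(6)[OF g] by blast
  moreover have "chain_from_to X f \<delta> y y p" using orbit_chain[where X=X and f=f, OF hf y(1) y(1) p(1) d] goodR_D(6)[OF g] p by blast
  ultimately show ?thesis using p by blast
qed

lemma R_equiv:
  assumes g: "goodR X f R \<delta> lm" and hf: "\<And>x. x\<in>X \<Longrightarrow> f x \<in> X" and cX: "compact X"
    and d: "0 \<le> \<delta>" and r: "R y y'"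
  shows "chain_equiv X f \<delta> y y'"
  using step1[OF g hf cX d r] step1[OF g hf cX d goodR_D(4)[OF g r]] unfolding chain_equiv_def by blast

lemma comps_saturated:
  assumes g: "goodR X f R \<delta> lm" and hf: "\<And>x. x\<in>X \<Longrightarrow> f x \<in> X" and cX: "compact X"
    and d: "0 \<le> \<delta>" and C: "C \<in> chain_components X f \<delta>"
  shows "saturated X R C" "D \<in> cyclic_components X f \<delta> C \<Longrightarrow> saturated X R D"
proof -
  obtain x0 where x0: "x0 \<in> X" "C = {y\<in>X. chain_equiv X f \<delta> x0 y}" using C unfolding chain_components_def by blast
  show satC: "saturated X R C"
    unfolding saturated_def x0(2)
    using R_equiv[OF g hf cX d] chain_equiv_trans goodR_D(2)[OF g] by blast
  assume "D \<in> cyclic_components X f \<delta> C"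
  then obtain x where x: "x \<in> C" "D = {y\<in>C. \<exists>k. cycle_period X f \<delta> C dvd k \<and> chain_from_to X f \<delta> x y k}"
    unfolding cyclic_components_def by blast
  show "saturated X R D"
    unfolding saturated_def
  proof (intro conjI ballI allI impI)
    show "D \<subseteq> X" using x satC unfolding saturated_def by blast
    fix y y' assume yD: "y \<in> D" and r: "R y y'"
    have yC: "y \<in> C" using yD x by blast
    then have y'C: "y' \<in> C" using satC r unfolding saturated_def by blast
    obtain k where k: "cycle_period X f \<delta> C dvd k" "chain_from_to X f \<delta> x y k" using yD x by blast
    obtain p where p: "p \<ge> 1" "chain_from_to X f \<delta> y y' p" "chain_from_to X f \<delta> y y p"
      using step1[OF g hf cX d r] by blast
    obtain c where c: "dchain X f \<delta> c p" "c 0 = y" "c p = y" using p(3) unfolding chain_from_to_def by blast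
    have "\<forall>i\<le>p. c i \<in> C"
    proof (intro allI impI)
      fix i assume "i \<le> p"
      then have "chain_equiv X f \<delta> y (c i)" "c i \<in> X" using cycle_equiv[of X f \<delta> c p i] c unfolding dchain_def by auto
      then show "c i \<in> C" using yC x0(2) chain_equiv_trans by blast
    qed
    then have "p \<in> {k. \<exists>c. dchain X f \<delta> c k \<and> c 0 = c k \<and> (\<forall>i\<le>k. c i \<in> C)}" using c by auto
    then have "cycle_period X f \<delta> C dvd p" unfolding cycle_period_def by (rule Gcd_dvd)
    then have "cycle_period X f \<delta> C dvd k + p" using k(1) by simp
    moreover have "chain_from_to X f \<delta> x y' (k + p)" using concat_chain k(2) p(2) by blast
    ultimately show "y' \<in> D" using x y'C by blast
  qed
qed

lemma comps_small:
  assumes g: "goodR X f R e lm" and hf: "\<And>x. x\<in>X \<Longrightarrow> f x \<in> X"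
    and d: "\<delta> \<le> lm" and C: "C \<in> chain_components X f \<delta>" and D: "D \<in> cyclic_components X f \<delta> C"
    and y: "y \<in> D" and y': "y' \<in> D"
  shows "dist y y' \<le> e"
proof -
  have fX: "(f^^n) z \<in> X" if "z \<in> X" for n z using funpow_in[of X f, OF hf that] .
  have fR: "R ((f^^n) a) ((f^^n) b) \<longleftrightarrow> R a b" if "a \<in> X" "b \<in> X" for n a b
    using funpow_R[OF g hf that] .
  have rs: "R b a" if "R a b" for a b using goodR_D(4)[OF g that] .
  have rt: "R a c" if "R a b" "R b c" for a b c using goodR_D(5)[OF g that] .
  have comm: "(f^^a) ((f^^b) z) = (f^^b) ((f^^a) z)" for a b z
  proof -
    have "(f^^a) ((f^^b) z) = (f^^(a+b)) z" by (simp add: funpow_add)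
    also have "\<dots> = (f^^(b+a)) z" by (simp add: add.commute)
    also have "\<dots> = (f^^b) ((f^^a) z)" by (simp add: funpow_add)
    finally show ?thesis .
  qed
  obtain x0 where x0: "x0 \<in> X" "C = {y\<in>X. chain_equiv X f \<delta> x0 y}" using C unfolding chain_components_def by blast
  obtain x where x: "x \<in> C" "D = {y\<in>C. \<exists>k. cycle_period X f \<delta> C dvd k \<and> chain_from_to X f \<delta> x y k}"
    using D unfolding cyclic_components_def by blast
  have xX: "x \<in> X" using x x0 by blast
  define K where "K = {k. R ((f^^k) x) x}"
  define S where "S = {k. \<exists>c. dchain X f \<delta> c k \<and> c 0 = c k \<and> (\<forall>i\<le>k. c i \<in> C)}"
  have key: "k \<in> K" if "cycle_period X f \<delta> C dvd k" for k
  proof (rule K_lemma[of K S])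
    show "0 \<in> K" unfolding K_def using goodR_D(3)[OF g xX] by simp
    show "a + b \<in> K" if ab: "a \<in> K" "b \<in> K" for a b
    proof -
      have ra: "R ((f^^a) x) x" and rb: "R ((f^^b) x) x" using ab unfolding K_def by auto
      have "R ((f^^a) ((f^^b) x)) ((f^^a) x)" using rb unfolding fR[OF fX[OF xX] xX] .
      then have "R ((f^^(a+b)) x) ((f^^a) x)" by (simp add: funpow_add)
      then have "R ((f^^(a+b)) x) x" using rt ra by blast
      then show ?thesis unfolding K_def by simp
    qed
    show "a - b \<in> K" if ab: "a \<in> K" "b \<in> K" "b \<le> a" for a b
    proof -
      have e1: "(f^^a) x = (f^^b) ((f^^(a-b)) x)" using ab(3)
        by (metis funpow_add le_add_diff_inverse o_apply)
      have "R ((f^^a) x) x" "R ((f^^b) x) x" using ab(1,2) unfolding K_def by auto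
      then have "R ((f^^a) x) ((f^^b) x)" using rs rt by blast
      then have "R ((f^^b) ((f^^(a-b)) x)) ((f^^b) x)" using e1 by simp
      then have "R ((f^^(a-b)) x) x" unfolding fR[OF fX[OF xX] xX] .
      then show ?thesis unfolding K_def by simp
    qed
    show "S \<subseteq> K"
    proof
      fix j assume "j \<in> S"
      then obtain c where c: "dchain X f \<delta> c j" "c 0 = c j" "\<forall>i\<le>j. c i \<in> C" unfolding S_def by blast
      define z where "z = c 0"
      have zC: "z \<in> C" using c z_def by auto
      have zX: "z \<in> X" using zC x0 by blast
      have cz: "chain_from_to X f \<delta> z z j" unfolding chain_from_to_def z_def using c(1,2) by (intro exI[of _ c]) simp
      have "chain_equiv X f \<delta> x0 x" using x x0 by blast
      then obtain b where b: "chain_from_to X f \<delta> x x0 b" unfolding chain_equiv_def by blast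
      have "chain_equiv X f \<delta> x0 z" using zC x0 by blast
      then obtain a where a: "chain_from_to X f \<delta> x0 z a" unfolding chain_equiv_def by blast
      have r1: "R x0 ((f^^b) x)" using chain_track2[OF g hf d b] .
      have r2: "R z ((f^^a) x0)" using chain_track2[OF g hf d a] .
      have r3: "R z ((f^^j) z)" using chain_track2[OF g hf d cz] .
      define w where "w = (f^^(a+b)) x"
      have wX: "w \<in> X" using fX[OF xX] unfolding w_def .
      have "R ((f^^a) x0) ((f^^a) ((f^^b) x))" using r1 unfolding fR[OF x0(1) fX[OF xX]] .
      then have "R ((f^^a) x0) w" unfolding w_def by (simp add: funpow_add)
      then have rzw: "R z w" using rt[OF r2] by blast
      have "R ((f^^j) z) ((f^^j) w)" using rzw unfolding fR[OF zX wX] .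
      then have "R w ((f^^j) w)" using rt[OF rs[OF rzw] rt[OF r3]] by blast
      moreover have "(f^^j) w = (f^^(a+b)) ((f^^j) x)" unfolding w_def by (rule comm)
      ultimately have "R ((f^^(a+b)) x) ((f^^(a+b)) ((f^^j) x))" unfolding w_def by simp
      then have "R x ((f^^j) x)" unfolding fR[OF xX fX[OF xX]] .
      then show "j \<in> K" unfolding K_def using rs by blast
    qed
    show "Gcd S dvd k" using that unfolding S_def cycle_period_def .
  qed
  have toX: "R v x" if "v \<in> D" for v
  proof -
    have "v \<in> {y\<in>C. \<exists>k. cycle_period X f \<delta> C dvd k \<and> chain_from_to X f \<delta> x y k}" using that x(2) by simp
    then obtain k where k: "cycle_period X f \<delta> C dvd k" "chain_from_to X f \<delta> x v k" by blast
    have "R v ((f^^k) x)" using chain_track2[OF g hf d k(2)] .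
    moreover have "R ((f^^k) x) x" using key[OF k(1)] unfolding K_def by simp
    ultimately show ?thesis by (rule rt)
  qed
  have "R y y'" using rt[OF toX[OF y] rs[OF toX[OF y']]] .
  then show ?thesis by (rule goodR_D(6)[OF g])
qed


lemma diam_le:
  assumes "\<And>x y. x\<in>S \<Longrightarrow> y\<in>S \<Longrightarrow> dist x y \<le> d" "0 \<le> d"
  shows "diameter S \<le> d"
  unfolding diameter_def using assms by (auto intro!: cSUP_least)

theorem lemma4p2:
  fixes X :: "'a::metric_space set" and f :: "'a \<Rightarrow> 'a"
  assumes "compact X" and "zero_dim X" and "is_homeo X f" and "equicontinuous X f"
  shows "((\<lambda>\<delta>. r_fun X f \<delta>) \<longlongrightarrow> 0) (at_right 0)"
proof -
  obtain g where hom: "homeomorphism X X f g" using assms(3) unfolding is_homeo_def by blast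
  have hf: "\<And>x. x\<in>X \<Longrightarrow> f x \<in> X" using homeo_basic(3)[OF hom] .
  obtain x1 where x1: "x1 \<in> X" using assms(2) unfolding zero_dim_def by blast
  define F where "F \<delta> = {diameter D | D C. C \<in> chain_components X f \<delta> \<and> D \<in> cyclic_components X f \<delta> C}" for \<delta>
  have rF: "r_fun X f \<delta> = Max (F \<delta>)" for \<delta> unfolding r_fun_def F_def by simp
  have bnd: "bounded D" if "D \<subseteq> X" for D using compact_imp_bounded[OF assms(1)] bounded_subset that by blast
  have Fprops: "finite (F \<delta>) \<and> F \<delta> \<noteq> {}" if hd: "\<delta> > 0" for \<delta>
  proof
    obtain R lm where g: "goodR X f R \<delta> lm" using exists_goodR[OF assms(1,2) hom assms(4) hd] by blast
    have d0: "0 \<le> \<delta>" using hd by simp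
    have "F \<delta> \<subseteq> diameter ` {D. saturated X R D}"
    proof
      fix v assume "v \<in> F \<delta>"
      then obtain D C where "v = diameter D" "C \<in> chain_components X f \<delta>" "D \<in> cyclic_components X f \<delta> C"
        unfolding F_def by blast
      then show "v \<in> diameter ` {D. saturated X R D}" using comps_saturated(2)[OF g hf assms(1) d0] by blast
    qed
    then show "finite (F \<delta>)" using sat_finite[OF g assms(1)] finite_surj by blast
    define C where "C = {y\<in>X. chain_equiv X f \<delta> x1 y}"
    have C: "C \<in> chain_components X f \<delta>" unfolding C_def chain_components_def using x1 by blast
    have "x1 \<in> C" unfolding C_def using x1 R_equiv[OF g hf assms(1) d0 goodR_D(3)[OF g x1]] by blast
    then have "{y\<in>C. \<exists>k. cycle_period X f \<delta> C dvd k \<and> chain_from_to X f \<delta> x1 y k} \<in> cyclic_components X f \<delta> C"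
      unfolding cyclic_components_def by blast
    then show "F \<delta> \<noteq> {}" using C unfolding F_def by blast
  qed
  show ?thesis
    unfolding tendsto_iff
  proof (intro allI impI)
    fix \<epsilon> :: real assume e: "\<epsilon> > 0"
    obtain R lm where g: "goodR X f R (\<epsilon>/2) lm" using exists_goodR[OF assms(1,2) hom assms(4), of "\<epsilon>/2"] e by auto
    show "eventually (\<lambda>\<delta>. dist (r_fun X f \<delta>) 0 < \<epsilon>) (at_right 0)"
      unfolding eventually_at_right_field
    proof (intro exI[of _ lm] conjI allI impI)
      show "0 < lm" using goodR_D(7)[OF g] .
      fix \<delta> :: real assume d: "0 < \<delta>" "\<delta> < lm"
      have all: "0 \<le> v \<and> v \<le> \<epsilon>/2" if hv: "v \<in> F \<delta>" for v
      proof -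
        obtain D C where DC: "v = diameter D" "C \<in> chain_components X f \<delta>" "D \<in> cyclic_components X f \<delta> C"
          using hv unfolding F_def by blast
        have "D \<subseteq> X" using DC(2,3) unfolding chain_components_def cyclic_components_def by blast
        then have "0 \<le> v" using DC(1) bnd diameter_ge_0 by blast
        moreover have "v \<le> \<epsilon>/2" unfolding DC(1)
          using comps_small[OF g hf _ DC(2,3)] d e by (intro diam_le) auto
        ultimately show ?thesis by simp
      qed
      have "Max (F \<delta>) \<in> F \<delta>" using Fprops[OF d(1)] by (intro Max_in) auto
      then have "0 \<le> r_fun X f \<delta> \<and> r_fun X f \<delta> \<le> \<epsilon>/2" using all rF by auto
      then show "dist (r_fun X f \<delta>) 0 < \<epsilon>" using e by simp
    qed
  qed
qed


end
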